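(* Let $X$, $Y$ be bigraphs and $f,g:X\to Y$ bigraph homomorphisms which are $\times$-homotopic. Then for every bigraph $Z$ the graph homomorphisms $f^*, g^*: Z^Y\to Z^X$, $h\mapsto h\circ f$ and $h\mapsto h\circ g$, are $\times$-homotopic, i.e. they lie in the same connected component of $\mathrm{Hom}(Z^Y,Z^X)$.
   Context: A graph is a set $V$ with a symmetric relation $E\subset V\times V$ (loops allowed). $K_2$ has vertices $0,1$ and edges $(0,1),(1,0)$. A bigraph is a graph $X$ with a graph homomorphism $\varepsilon_X:X\to K_2$; $V_i(X)=\varepsilon_X^{-1}(i)$; bigraph homomorphisms commute with colorings. For bigraphs $X,Y$, $Y^X$ is the graph whose vertices are maps $h:V(X)\to V(Y)$ with $\varepsilon_Y\circ h=\varepsilon_X$, with $h,h'$ adjacent iff $(h(a),h'(a'))\in E(Y)$ for all $(a,a')\in E(X)$. A multi-homomorphism $\eta$ from a graph $T$ to a graph $H$ assigns to each vertex of $T$ a finite nonempty set of vertices of $H$ with $\eta(v)\times\eta(w)\subset E(H)$ whenever $(v,w)\in E(T)$; $\mathrm{Hom}(T,H)$ is the poset of these ordered by pointwise inclusion, a homomorphism $f$ being identified with $v\mapsto\{f(v)\}$. For bigraphs, $\mathrm{Hom}_{/K_2}(X,Y)$ is the subposet of those with $\eta(v)\subset V_i(Y)$ for $v\in V_i(X)$, and bigraph homomorphisms $f,g:X\to Y$ are $\times$-homotopic if they lie in the same connected component of $\mathrm{Hom}_{/K_2}(X,Y)$. *)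

theory Defs
  imports "HOL-Library.FuncSet"
begin

record 'a graph =
  verts :: "'a set"
  edges :: "('a \<times> 'a) set"

record 'a bigraph = "'a graph" +
  col :: "'a \<Rightarrow> nat"

definition is_graph :: "('a, 'b) graph_scheme \<Rightarrow> bool" where
  "is_graph G \<longleftrightarrow> edges G \<subseteq> verts G \<times> verts G \<and> sym (edges G)"

definition K2 :: "nat graph" where
  "K2 = \<lparr>verts = {0, 1}, edges = {(0, 1), (1, 0)}\<rparr>"

definition graph_hom :: "('a, 'c) graph_scheme \<Rightarrow> ('b, 'd) graph_scheme \<Rightarrow> ('a \<Rightarrow> 'b) \<Rightarrow> bool" where
  "graph_hom G H f \<longleftrightarrow> (\<forall>v\<in>verts G. f v \<in> verts H) \<and>
     (\<forall>(a, b)\<in>edges G. (f a, f b) \<in> edges H)"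

definition is_bigraph :: "'a bigraph \<Rightarrow> bool" where
  "is_bigraph X \<longleftrightarrow> is_graph X \<and> graph_hom X K2 (col X)"

definition bigraph_hom :: "'a bigraph \<Rightarrow> 'b bigraph \<Rightarrow> ('a \<Rightarrow> 'b) \<Rightarrow> bool" where
  "bigraph_hom X Y f \<longleftrightarrow> graph_hom X Y f \<and> (\<forall>v\<in>verts X. col Y (f v) = col X v)"

definition exp_graph :: "'z bigraph \<Rightarrow> 'y bigraph \<Rightarrow> ('y \<Rightarrow> 'z) graph" where
  "exp_graph Z Y =
     (let V = {h. h \<in> verts Y \<rightarrow>\<^sub>E verts Z \<and> (\<forall>a\<in>verts Y. col Z (h a) = col Y a)}
      in \<lparr>verts = V,
          edges = {(h, h'). h \<in> V \<and> h' \<in> V \<and>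
                     (\<forall>(a, a')\<in>edges Y. (h a, h' a') \<in> edges Z)}\<rparr>)"

definition multi_hom :: "('a, 'c) graph_scheme \<Rightarrow> ('b, 'd) graph_scheme \<Rightarrow> ('a \<Rightarrow> 'b set) \<Rightarrow> bool" where
  "multi_hom T H \<eta> \<longleftrightarrow>
     (\<forall>v\<in>verts T. finite (\<eta> v) \<and> \<eta> v \<noteq> {} \<and> \<eta> v \<subseteq> verts H) \<and>
     (\<forall>v. v \<notin> verts T \<longrightarrow> \<eta> v = {}) \<and>
     (\<forall>(v, w)\<in>edges T. \<eta> v \<times> \<eta> w \<subseteq> edges H)"

definition Hom :: "('a, 'c) graph_scheme \<Rightarrow> ('b, 'd) graph_scheme \<Rightarrow> ('a \<Rightarrow> 'b set) set" where
  "Hom T H = {\<eta>. multi_hom T H \<eta>}"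

definition Hom_K2 :: "'a bigraph \<Rightarrow> 'b bigraph \<Rightarrow> ('a \<Rightarrow> 'b set) set" where
  "Hom_K2 X Y = {\<eta> \<in> Hom X Y. \<forall>v\<in>verts X. \<eta> v \<subseteq> {y \<in> verts Y. col Y y = col X v}}"

text \<open>Connected components of a poset (ordered by pointwise inclusion):
  equivalence generated by comparability inside the poset.\<close>
definition same_component :: "('a \<Rightarrow> 'b set) set \<Rightarrow> ('a \<Rightarrow> 'b set) \<Rightarrow> ('a \<Rightarrow> 'b set) \<Rightarrow> bool" where
  "same_component P \<eta> \<eta>' \<longleftrightarrow> \<eta> \<in> P \<and> \<eta>' \<in> P \<and>
     (\<lambda>x y. x \<in> P \<and> y \<in> P \<and> (x \<le> y \<or> y \<le> x))\<^sup>*\<^sup>* \<eta> \<eta>'"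

definition as_multi :: "('a, 'c) graph_scheme \<Rightarrow> ('a \<Rightarrow> 'b) \<Rightarrow> ('a \<Rightarrow> 'b set)" where
  "as_multi T f = (\<lambda>v. if v \<in> verts T then {f v} else {})"

definition times_homotopic :: "'a bigraph \<Rightarrow> 'b bigraph \<Rightarrow> ('a \<Rightarrow> 'b) \<Rightarrow> ('a \<Rightarrow> 'b) \<Rightarrow> bool" where
  "times_homotopic X Y f g \<longleftrightarrow> same_component (Hom_K2 X Y) (as_multi X f) (as_multi X g)"

definition precomp :: "'x bigraph \<Rightarrow> ('x \<Rightarrow> 'y) \<Rightarrow> ('y \<Rightarrow> 'z) \<Rightarrow> ('x \<Rightarrow> 'z)" where
  "precomp X f h = restrict (h \<circ> f) (verts X)"

end

theory Submission
  imports Defs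
begin

definition sel :: "'x bigraph \<Rightarrow> ('x \<Rightarrow> 'y set) \<Rightarrow> ('x \<Rightarrow> 'y) \<Rightarrow> bool" where
  "sel X \<eta> s \<longleftrightarrow> (\<forall>a\<in>verts X. s a \<in> \<eta> a)"

definition Phi :: "'z bigraph \<Rightarrow> 'y bigraph \<Rightarrow> 'x bigraph \<Rightarrow> ('x \<Rightarrow> 'y) \<Rightarrow> ('x \<Rightarrow> 'y)
   \<Rightarrow> ('y \<Rightarrow> 'z) \<Rightarrow> ('x \<Rightarrow> 'z) set" where
  "Phi Z Y X s t h = (if h \<in> verts (exp_graph Z Y) then {precomp X s h, precomp X t h} else {})"

lemma precomp_vert:
  assumes "\<eta> \<in> Hom_K2 X Y" "sel X \<eta> s" "h \<in> verts (exp_graph Z Y)"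
  shows "precomp X s h \<in> verts (exp_graph Z X)"
proof -
  have hs: "\<And>a. a \<in> verts X \<Longrightarrow> s a \<in> verts Y \<and> col Y (s a) = col X a"
    using assms(1,2) unfolding Hom_K2_def sel_def by blast
  show ?thesis using assms(3) hs
    unfolding exp_graph_def precomp_def Let_def by (auto simp: PiE_iff)
qed

lemma Phi_hom:
  assumes G: "is_graph X" and e: "\<eta> \<in> Hom_K2 X Y" and s: "sel X \<eta> s" and t: "sel X \<eta> t"
  shows "Phi Z Y X s t \<in> Hom (exp_graph Z Y) (exp_graph Z X)"
proof -
  have ed: "\<And>s t h h'. sel X \<eta> s \<Longrightarrow> sel X \<eta> t \<Longrightarrow> (h, h') \<in> edges (exp_graph Z Y) \<Longrightarrow>
      (precomp X s h, precomp X t h') \<in> edges (exp_graph Z X)"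
  proof -
    fix s t h h' assume s: "sel X \<eta> s" and t: "sel X \<eta> t" and hh: "(h, h') \<in> edges (exp_graph Z Y)"
    have hv: "h \<in> verts (exp_graph Z Y)" "h' \<in> verts (exp_graph Z Y)"
      using hh unfolding exp_graph_def Let_def by auto
    have hE: "\<forall>(a, a')\<in>edges Y. (h a, h' a') \<in> edges Z"
      using hh unfolding exp_graph_def Let_def by auto
    have "\<forall>(a, a')\<in>edges X. (precomp X s h a, precomp X t h' a') \<in> edges Z"
    proof (clarify)
      fix a a' assume aa: "(a, a') \<in> edges X"
      hence av: "a \<in> verts X" "a' \<in> verts X" using G unfolding is_graph_def by auto
      have "\<eta> a \<times> \<eta> a' \<subseteq> edges Y" using e aa unfolding Hom_K2_def Hom_def multi_hom_def by blast
      moreover have "s a \<in> \<eta> a" "t a' \<in> \<eta> a'" using s t av unfolding sel_def by auto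
      ultimately have "(s a, t a') \<in> edges Y" by blast
      thus "(precomp X s h a, precomp X t h' a') \<in> edges Z"
        using hE av unfolding precomp_def by auto
    qed
    moreover have "precomp X s h \<in> verts (exp_graph Z X)" "precomp X t h' \<in> verts (exp_graph Z X)"
      using precomp_vert[OF e s hv(1)] precomp_vert[OF e t hv(2)] by auto
    ultimately show "(precomp X s h, precomp X t h') \<in> edges (exp_graph Z X)"
      unfolding exp_graph_def Let_def by auto
  qed
  show ?thesis unfolding Hom_def multi_hom_def
  proof (intro CollectI conjI ballI allI impI)
    fix h assume "h \<in> verts (exp_graph Z Y)"
    thus "finite (Phi Z Y X s t h)" "Phi Z Y X s t h \<noteq> {}"
      "Phi Z Y X s t h \<subseteq> verts (exp_graph Z X)"
      using precomp_vert[OF e s] precomp_vert[OF e t] unfolding Phi_def by auto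
  next
    fix h assume "h \<notin> verts (exp_graph Z Y)"
    thus "Phi Z Y X s t h = {}" unfolding Phi_def by auto
  next
    fix p assume p: "p \<in> edges (exp_graph Z Y)"
    obtain h h' where pe: "p = (h, h')" by (cases p)
    have hv: "h \<in> verts (exp_graph Z Y)" "h' \<in> verts (exp_graph Z Y)"
      using p pe unfolding exp_graph_def Let_def by auto
    show "case p of (v, w) \<Rightarrow> Phi Z Y X s t v \<times> Phi Z Y X s t w \<subseteq> edges (exp_graph Z X)"
    proof -
      have "Phi Z Y X s t h = {precomp X s h, precomp X t h}" "Phi Z Y X s t h' = {precomp X s h', precomp X t h'}"
        using hv unfolding Phi_def by simp_all
      moreover have "(h, h') \<in> edges (exp_graph Z Y)" using p pe by simp
      ultimately show ?thesis using ed[OF s s] ed[OF s t] ed[OF t s] ed[OF t t] unfolding pe by auto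
    qed
  qed
qed

lemma as_multi_Phi: "as_multi (exp_graph Z Y) (precomp X s) = Phi Z Y X s s"
  unfolding as_multi_def Phi_def by (rule ext) auto

lemma key:
  assumes G: "is_graph X" and e: "\<eta> \<in> Hom_K2 X Y" and s: "sel X \<eta> s" and t: "sel X \<eta> t"
  shows "same_component (Hom (exp_graph Z Y) (exp_graph Z X))
           (as_multi (exp_graph Z Y) (precomp X s)) (as_multi (exp_graph Z Y) (precomp X t))"
proof -
  define P where "P = Hom (exp_graph Z Y) (exp_graph Z X)"
  define R where "R = (\<lambda>x y. x \<in> P \<and> y \<in> P \<and> (x \<le> y \<or> y \<le> x))"
  define a where "a = Phi Z Y X s s"
  define b where "b = Phi Z Y X s t"
  define c where "c = Phi Z Y X t t"
  have h1: "a \<in> P" "c \<in> P" "b \<in> P"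
    unfolding a_def b_def c_def P_def using Phi_hom[OF G e] s t by blast+
  have "a \<le> b" "c \<le> b"
    unfolding a_def b_def c_def Phi_def le_fun_def by auto
  hence r1: "R a b" and r2: "R b c" unfolding R_def using h1 by blast+
  have "R\<^sup>*\<^sup>* a c" using r1 r2 by (metis rtranclp.rtrancl_refl rtranclp.rtrancl_into_rtrancl)
  hence "same_component P a c" unfolding same_component_def R_def using h1 by blast
  thus ?thesis unfolding as_multi_Phi P_def a_def c_def .
qed

lemma sel_exists:
  assumes "\<eta> \<in> Hom_K2 X Y" shows "\<exists>s. sel X \<eta> s"
proof -
  have "\<forall>a\<in>verts X. \<eta> a \<noteq> {}" using assms unfolding Hom_K2_def Hom_def multi_hom_def by auto
  hence "sel X \<eta> (\<lambda>a. SOME y. y \<in> \<eta> a)" unfolding sel_def by (auto intro: some_in_eq[THEN iffD2])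
  thus ?thesis by blast
qed

lemma sc_trans:
  "same_component P a b \<Longrightarrow> same_component P b c \<Longrightarrow> same_component P a c"
  unfolding same_component_def by auto

theorem lemma3p7:
  fixes X :: "'x bigraph" and Y :: "'y bigraph" and Z :: "'z bigraph"
    and f g :: "'x \<Rightarrow> 'y"
  assumes "is_bigraph X" and "is_bigraph Y" and "is_bigraph Z"
    and "bigraph_hom X Y f" and "bigraph_hom X Y g"
    and "times_homotopic X Y f g"
  shows "same_component (Hom (exp_graph Z Y) (exp_graph Z X))
           (as_multi (exp_graph Z Y) (precomp X f))
           (as_multi (exp_graph Z Y) (precomp X g))"
proof -
  have G: "is_graph X" using assms(1) unfolding is_bigraph_def by auto
  let ?Q = "Hom_K2 X Y"
  let ?R = "\<lambda>x y. x \<in> ?Q \<and> y \<in> ?Q \<and> (x \<le> y \<or> y \<le> x)"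
  let ?A = "\<lambda>s. as_multi (exp_graph Z Y) (precomp X s)"
  let ?P = "Hom (exp_graph Z Y) (exp_graph Z X)"
  have f0: "as_multi X f \<in> ?Q" and ch: "?R\<^sup>*\<^sup>* (as_multi X f) (as_multi X g)"
    and g0: "as_multi X g \<in> ?Q"
    using assms(6) unfolding times_homotopic_def same_component_def by auto
  have sf: "sel X (as_multi X f) f" "sel X (as_multi X g) g"
    unfolding sel_def as_multi_def by auto
  have "\<eta> \<in> ?Q \<longrightarrow> (\<forall>s. sel X \<eta> s \<longrightarrow> same_component ?P (?A f) (?A s))" if "?R\<^sup>*\<^sup>* (as_multi X f) \<eta>" for \<eta>
    using that
  proof (induction rule: rtranclp_induct)
    case base
    then show ?case using key[OF G f0 sf(1)] by blast
  next
    case (step y z)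
    show ?case
    proof (intro impI allI)
      fix s' assume zq: "z \<in> ?Q" and s': "sel X z s'"
      have yq: "y \<in> ?Q" using step.hyps(2) by auto
      obtain s where s: "sel X y s" using sel_exists[OF yq] by blast
      have IH: "same_component ?P (?A f) (?A s)" using step.IH yq s by blast
      have "same_component ?P (?A s) (?A s')"
      proof (cases "y \<le> z")
        case True
        hence "sel X z s" using s unfolding sel_def le_fun_def by blast
        thus ?thesis using key[OF G zq _ s'] by blast
      next
        case False
        hence "z \<le> y" using step.hyps(2) by auto
        hence "sel X y s'" using s' unfolding sel_def le_fun_def by blast
        thus ?thesis using key[OF G yq s] by blast
      qed
      thus "same_component ?P (?A f) (?A s')" using IH sc_trans by blast
    qed
  qed
  thus ?thesis using ch g0 sf(2) by blast
qed

end
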